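(* Let $\mathcal{H}$ be a separable complex Hilbert space, $A\in\mathcal{B}(\mathcal{H})$, and $g\in\mathrm{ran}A$. Let $(u_n)_{n\in\mathbb{N}}$ and $(v_n)_{n\in\mathbb{N}}$ be orthonormal bases of $\mathcal{H}$, and for each $N$ let $A_N$ and $g_N$ be as defined in the context. Then there exists a sequence $(f^{(N)})_{N\in\mathbb{N}}$ with $f^{(N)}\in\mathbb{C}^N$ for each $N$ such that \[\lim_{N\to\infty}\|A_Nf^{(N)}-g_N\|_{\mathbb{C}^N}=0.\]
   Context: For orthonormal bases $(u_n)$, $(v_n)$ of $\mathcal{H}$ and $N\in\mathbb{N}$: $A_N$ is the $N\times N$ matrix with entries $(A_N)_{ij}=\langle v_i,Au_j\rangle$ for $i,j\in\{1,\dots,N\}$, and $g_N=(\langle v_1,g\rangle,\dots,\langle v_N,g\rangle)\in\mathbb{C}^N$. The inner product is antilinear in the first entry. $\mathcal{B}(\mathcal{H})$ denotes the bounded everywhere defined linear operators on $\mathcal{H}$. *)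

theory Defs
  imports "HOL-Analysis.Analysis"
begin

class scaleC = scaleR +
  fixes scaleC :: "complex \<Rightarrow> 'a \<Rightarrow> 'a" (infixr "*\<^sub>C" 75)
  assumes scaleR_scaleC: "scaleR r = scaleC (complex_of_real r)"

class complex_vector = scaleC + real_vector +
  assumes scaleC_add_right: "a *\<^sub>C (x + y) = a *\<^sub>C x + a *\<^sub>C y"
    and scaleC_add_left: "(a + b) *\<^sub>C x = a *\<^sub>C x + b *\<^sub>C x"
    and scaleC_scaleC: "a *\<^sub>C (b *\<^sub>C x) = (a * b) *\<^sub>C x"
    and scaleC_one: "1 *\<^sub>C x = x"

class complex_inner = complex_vector + real_normed_vector +
  fixes cinner :: "'a \<Rightarrow> 'a \<Rightarrow> complex"
  assumes cinner_commute: "cinner x y = cnj (cinner y x)"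
    and cinner_add_left: "cinner (x + y) z = cinner x z + cinner y z"
    and cinner_scaleC_left: "cinner (r *\<^sub>C x) y = cnj r * cinner x y"
    and cinner_self_real_nonneg: "Im (cinner x x) = 0 \<and> 0 \<le> Re (cinner x x)"
    and cinner_eq_zero_iff: "cinner x x = 0 \<longleftrightarrow> x = 0"
    and norm_eq_sqrt_cinner: "norm x = sqrt (Re (cinner x x))"

definition bounded_clinear_op :: "('a::complex_inner \<Rightarrow> 'b::complex_inner) \<Rightarrow> bool" where
  "bounded_clinear_op A \<longleftrightarrow>
     (\<forall>x y. A (x + y) = A x + A y) \<and> (\<forall>c x. A (c *\<^sub>C x) = c *\<^sub>C A x) \<and>
     (\<exists>K. \<forall>x. norm (A x) \<le> K * norm x)"

definition cspan :: "'a::complex_vector set \<Rightarrow> 'a set" where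
  "cspan S = {x. \<exists>F c. finite F \<and> F \<subseteq> S \<and> x = (\<Sum>v\<in>F. c v *\<^sub>C v)}"

definition is_onb :: "(nat \<Rightarrow> 'a::complex_inner) \<Rightarrow> bool" where
  "is_onb u \<longleftrightarrow> (\<forall>i j. cinner (u i) (u j) = (if i = j then 1 else 0))
                 \<and> closure (cspan (range u)) = UNIV"

text \<open>Finite sections: entries indexed by 0..N-1 (shifted from 1..N).\<close>
definition sect_mat :: "(nat \<Rightarrow> 'a::complex_inner) \<Rightarrow> (nat \<Rightarrow> 'a) \<Rightarrow> ('a \<Rightarrow> 'a) \<Rightarrow> nat \<Rightarrow> nat \<Rightarrow> complex" where
  "sect_mat u v A i j = cinner (v i) (A (u j))"

definition sect_vec :: "(nat \<Rightarrow> 'a::complex_inner) \<Rightarrow> 'a \<Rightarrow> nat \<Rightarrow> complex" where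
  "sect_vec v g i = cinner (v i) g"

definition cnorm_N :: "nat \<Rightarrow> (nat \<Rightarrow> complex) \<Rightarrow> real" where
  "cnorm_N N x = sqrt (\<Sum>i<N. (cmod (x i))\<^sup>2)"

end

theory Submission imports Defs begin

lemma cinner_add_right: "cinner x (y + z) = cinner x y + cinner x z"
  by (metis cinner_commute cinner_add_left complex_cnj_add)
lemma cinner_scaleC_right: "cinner x (r *\<^sub>C y) = r * cinner x y"
  by (metis cinner_commute cinner_scaleC_left complex_cnj_mult complex_cnj_cnj)
lemma cinner_zero_left[simp]: "cinner 0 y = 0"
  using cinner_add_left[of 0 0 y] by simp
lemma cinner_zero_right[simp]: "cinner y 0 = 0"
  using cinner_add_right[of y 0 0] by simp
lemma cinner_diff_left: "cinner (x - y) z = cinner x z - cinner y z"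
  using cinner_add_left[of "x - y" y z] by simp
lemma cinner_diff_right: "cinner z (x - y) = cinner z x - cinner z y"
  using cinner_add_right[of z "x - y" y] by simp
lemma cinner_sum_left: "cinner (\<Sum>i\<in>I. f i) y = (\<Sum>i\<in>I. cinner (f i) y)"
  by (induction I rule: infinite_finite_induct) (auto simp: cinner_add_left)
lemma cinner_sum_right: "cinner y (\<Sum>i\<in>I. f i) = (\<Sum>i\<in>I. cinner y (f i))"
  by (induction I rule: infinite_finite_induct) (auto simp: cinner_add_right)
lemma cinner_self_norm: "cinner x x = complex_of_real ((norm x)\<^sup>2)"
proof -
  have "Im (cinner x x) = 0" "0 \<le> Re (cinner x x)" using cinner_self_real_nonneg by auto
  then show ?thesis by (simp add: norm_eq_sqrt_cinner complex_eq_iff)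
qed

lemma bessel:
  fixes v :: "nat \<Rightarrow> 'a::complex_inner"
  assumes on: "\<forall>i j. cinner (v i) (v j) = (if i = j then 1 else 0)"
  shows "(\<Sum>i<N. (cmod (cinner (v i) z))\<^sup>2) \<le> (norm z)\<^sup>2"
proof -
  define a where "a i = cinner (v i) z" for i
  define s where "s = (\<Sum>i<N. a i *\<^sub>C v i)"
  define S where "S = (\<Sum>i<N. complex_of_real ((cmod (a i))\<^sup>2))"
  have cm: "cnj c * c = complex_of_real ((cmod c)\<^sup>2)" for c
    by (metis complex_norm_square mult.commute complex_mult_cnj)
  have 1: "cinner s z = S"
    unfolding s_def S_def cinner_sum_left cinner_scaleC_left a_def[symmetric]
    by (simp add: cm)
  have 2: "cinner z s = S"
    using 1 cinner_commute[of z s] unfolding S_def by simp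
  have 3: "cinner s s = S"
  proof -
    have "cinner s s = (\<Sum>i<N. a i * (\<Sum>j<N. cnj (a j) * (if j = i then 1 else 0)))"
      unfolding s_def by (simp only: cinner_sum_left cinner_scaleC_left cinner_sum_right cinner_scaleC_right on)
    also have "\<dots> = S" unfolding S_def
    proof (rule sum.cong)
      fix x assume x: "x \<in> {..<N}"
      have "(\<Sum>j<N. cnj (a j) * (if j = x then 1 else 0)) = (\<Sum>j\<in>{..<N}. if j = x then cnj (a j) else 0)"
        by (rule sum.cong) auto
      also have "\<dots> = cnj (a x)" using x by (simp add: sum.delta')
      finally show "a x * (\<Sum>j<N. cnj (a j) * (if j = x then 1 else 0)) = complex_of_real ((cmod (a x))\<^sup>2)"
        using cm[of "a x"] by (simp add: mult.commute)
    qed simp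
    finally show ?thesis .
  qed
  have "cinner (z - s) (z - s) = complex_of_real ((norm z)\<^sup>2) - S"
    by (simp only: cinner_diff_left cinner_diff_right 1 2 3 cinner_self_norm[of z]) simp
  then have "0 \<le> Re (complex_of_real ((norm z)\<^sup>2) - S)"
    using cinner_self_real_nonneg[of "z - s"] by simp
  then show ?thesis unfolding S_def a_def by simp
qed
lemma scaleC_zero_left[simp]: "(0::complex) *\<^sub>C (x::'a::complex_vector) = 0"
  using scaleC_add_left[of 0 0 x] by simp

lemma density:
  fixes u :: "nat \<Rightarrow> 'a::complex_inner"
  assumes "is_onb u" "e > 0"
  shows "\<exists>M. \<forall>N\<ge>M. \<exists>c. norm ((\<Sum>j<N. c j *\<^sub>C u j) - f) < e"
proof -
  have on: "\<forall>i j. cinner (u i) (u j) = (if i = j then 1 else 0)"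
   and cl: "closure (cspan (range u)) = UNIV" using assms(1) unfolding is_onb_def by auto
  have inj: "inj u"
  proof (rule injI)
    fix i j assume "u i = u j"
    then have "cinner (u i) (u i) = cinner (u i) (u j)" by simp
    then show "i = j" using on by (metis one_neq_zero)
  qed
  have "f \<in> closure (cspan (range u))" using cl by simp
  then obtain y where y: "y \<in> cspan (range u)" "dist y f < e"
    using assms(2) closure_approachable by blast
  then obtain F c where F: "finite F" "F \<subseteq> range u" "y = (\<Sum>w\<in>F. c w *\<^sub>C w)"
    unfolding cspan_def by blast
  define J where "J = u -` F"
  have fJ: "finite J" unfolding J_def using F(1) inj by (simp add: finite_vimageI)
  have FJ: "F = u ` J" unfolding J_def using F(2) by auto
  have yJ: "y = (\<Sum>j\<in>J. c (u j) *\<^sub>C u j)"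
    unfolding F(3) FJ by (simp add: sum.reindex inj_on_subset[OF inj])
  obtain M where M: "J \<subseteq> {..<M}" using fJ finite_nat_bounded by blast
  show ?thesis
  proof (intro exI[of _ M] allI impI)
    fix N assume "M \<le> N"
    then have JN: "J \<subseteq> {..<N}" using M by auto
    define c' where "c' j = (if j \<in> J then c (u j) else 0)" for j
    have "(\<Sum>j<N. c' j *\<^sub>C u j) = (\<Sum>j\<in>J. c' j *\<^sub>C u j)"
      by (rule sum.mono_neutral_right) (use JN in \<open>auto simp: c'_def\<close>)
    also have "\<dots> = y" unfolding yJ by (rule sum.cong) (auto simp: c'_def)
    finally show "\<exists>c. norm ((\<Sum>j<N. c j *\<^sub>C u j) - f) < e"
      using y(2) by (auto simp: dist_norm)
  qed
qed

theorem lemma2p2: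
  fixes A :: "'a::{complex_inner, complete_space} \<Rightarrow> 'a"
    and g :: 'a and u v :: "nat \<Rightarrow> 'a"
  assumes "\<exists>D :: 'a set. countable D \<and> closure D = UNIV"
    and "bounded_clinear_op A"
    and "g \<in> range A"
    and "is_onb u" and "is_onb v"
  shows "\<exists>f :: nat \<Rightarrow> nat \<Rightarrow> complex.
           (\<lambda>N. cnorm_N N (\<lambda>i. (\<Sum>j<N. sect_mat u v A i j * f N j) - sect_vec v g i))
             \<longlonglongrightarrow> 0"
proof -
  obtain f0 where g: "g = A f0" using assms(3) by auto
  have Aadd: "A (x + y) = A x + A y" for x y using assms(2) unfolding bounded_clinear_op_def by blast
  have Asc: "A (c *\<^sub>C x) = c *\<^sub>C A x" for c x using assms(2) unfolding bounded_clinear_op_def by blast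
  obtain K where K: "\<And>x. norm (A x) \<le> K * norm x" using assms(2) unfolding bounded_clinear_op_def by blast
  interpret Aa: additive A by unfold_locales (rule Aadd)
  have Asum: "A (\<Sum>j\<in>I. c j *\<^sub>C u j) = (\<Sum>j\<in>I. c j *\<^sub>C A (u j))" for I c
    by (simp add: Aa.sum Asc)
  have onv: "\<forall>i j. cinner (v i) (v j) = (if i = j then 1 else 0)" using assms(5) unfolding is_onb_def by auto
  define S where "S N c = norm ((\<Sum>j<N. c j *\<^sub>C u j) - f0)" for N c
  define d where "d N = Inf (range (S N))" for N
  have bdd: "bdd_below (range (S N))" for N unfolding S_def by (rule bdd_belowI[of _ 0]) auto
  have d0: "0 \<le> d N" for N unfolding d_def S_def by (rule cInf_greatest) auto
  have "\<exists>c. S N c < d N + 1 / (real N + 1)" for N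
  proof -
    have "Inf (range (S N)) < d N + 1 / (real N + 1)" unfolding d_def[symmetric] by simp
    then show ?thesis using cInf_lessD[of "range (S N)"] by blast
  qed
  then obtain cc where cc: "\<And>N. S N (cc N) < d N + 1 / (real N + 1)" by metis
  have dlim: "d \<longlonglongrightarrow> 0"
  proof (rule LIMSEQ_I)
    fix e :: real assume "e > 0"
    then obtain M where M: "\<forall>N\<ge>M. \<exists>c. S N c < e" using density[OF assms(4)] unfolding S_def by blast
    show "\<exists>no. \<forall>n\<ge>no. norm (d n - 0) < e"
    proof (intro exI allI impI)
      fix N assume "M \<le> N"
      then obtain c where "S N c < e" using M by blast
      moreover have "d N \<le> S N c" unfolding d_def by (rule cInf_lower[OF _ bdd]) auto
      ultimately show "norm (d N - 0) < e" using d0[of N] by simp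
    qed
  qed
  have "(\<lambda>N. d N + 1 / (real N + 1)) \<longlonglongrightarrow> 0 + 0"
  proof -
    have "(\<lambda>N. 1 / (real N + 1)) \<longlonglongrightarrow> 0"
      using LIMSEQ_inverse_real_of_nat by (simp add: divide_inverse add.commute)
    then show ?thesis using tendsto_add[OF dlim] by blast
  qed
  then have lim2: "(\<lambda>N. d N + 1 / (real N + 1)) \<longlonglongrightarrow> 0" by simp
  have bnd: "norm (S N (cc N)) \<le> d N + 1 / (real N + 1)" for N
  proof -
    have "0 \<le> S N (cc N)" unfolding S_def by simp
    then show ?thesis using cc[of N] by simp
  qed
  have rlim: "(\<lambda>N. S N (cc N)) \<longlonglongrightarrow> 0"
    by (rule Lim_null_comparison[OF always_eventually lim2]) (use bnd in blast)
  have main: "norm (cnorm_N N (\<lambda>i. (\<Sum>j<N. sect_mat u v A i j * cc N j) - sect_vec v g i)) \<le> K * S N (cc N)" for N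
  proof -
    define x where "x = (\<Sum>j<N. cc N j *\<^sub>C u j)"
    have Ax: "A x = (\<Sum>j<N. cc N j *\<^sub>C A (u j))" unfolding x_def by (rule Asum)
    have eq: "(\<Sum>j<N. sect_mat u v A i j * cc N j) - sect_vec v g i = cinner (v i) (A x - g)" for i
    proof -
      have "cinner (v i) (A x) = (\<Sum>j<N. cc N j * cinner (v i) (A (u j)))"
        unfolding Ax cinner_sum_right cinner_scaleC_right ..
      also have "\<dots> = (\<Sum>j<N. sect_mat u v A i j * cc N j)"
        unfolding sect_mat_def by (rule sum.cong) (simp_all add: mult.commute)
      finally show ?thesis unfolding cinner_diff_right sect_vec_def by simp
    qed
    have "cnorm_N N (\<lambda>i. (\<Sum>j<N. sect_mat u v A i j * cc N j) - sect_vec v g i)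
        = sqrt (\<Sum>i<N. (cmod (cinner (v i) (A x - g)))\<^sup>2)" unfolding cnorm_N_def eq ..
    also have "\<dots> \<le> sqrt ((norm (A x - g))\<^sup>2)" by (rule real_sqrt_le_mono, rule bessel[OF onv])
    also have "\<dots> = norm (A x - g)" by simp
    also have "A x - g = A (x - f0)" unfolding g by (rule Aa.diff[symmetric])
    also have "norm (A (x - f0)) \<le> K * S N (cc N)" unfolding S_def x_def[symmetric] by (rule K)
    finally have "cnorm_N N (\<lambda>i. (\<Sum>j<N. sect_mat u v A i j * cc N j) - sect_vec v g i) \<le> K * S N (cc N)" .
    moreover have "0 \<le> cnorm_N N (\<lambda>i. (\<Sum>j<N. sect_mat u v A i j * cc N j) - sect_vec v g i)"
      unfolding cnorm_N_def by (intro real_sqrt_ge_zero sum_nonneg) simp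
    ultimately show ?thesis by simp
  qed
  show ?thesis
    by (rule exI[of _ cc], rule Lim_null_comparison[OF always_eventually tendsto_mult_right_zero[OF rlim, of K]])
       (use main in blast)
qed

end
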